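(* Let $k\ge1$, $A\subseteq\mathbb{R}$ open, $x\in A$ and $f\in C^k(A,\mathbb{R})$. Then for all $h\in D_k$, $${}^\bullet f(x+h)=\sum_{i=0}^k\frac{h^i}{i!}\,f^{(i)}(x)\quad\text{in }{}^\bullet\mathbb{R},$$ and the real coefficients $f^{(i)}(x)$, $i=0,\dots,k$, are uniquely determined by this formula (i.e. if $c_0,\dots,c_k\in\mathbb{R}$ satisfy ${}^\bullet f(x+h)=\sum_{i=0}^k\frac{h^i}{i!}c_i$ for all $h\in D_k$, then $c_i=f^{(i)}(x)$).
   Context: A function $x:\mathbb{R}\to\mathbb{R}$ is nilpotent if $|x(t)-x(0)|^m=o(t)$ as $t\to0$ for some $m\in\mathbb{N}$; for $A\subseteq\mathbb{R}$, $\mathrm{Nil}(A)$ is the set of nilpotent functions with values in $A$; $x\sim y$ iff $x(t)=y(t)+o(t)$ as $t\to0$. ${}^\bullet A:=\mathrm{Nil}(A)/\sim\subseteq{}^\bullet\mathbb{R}:=\mathrm{Nil}(\mathbb{R})/\sim$ (a commutative ring under pointwise operations, reals identified with constant functions). For locally Lipschitz $g:A\to\mathbb{R}$, ${}^\bullet g([y]):=[g\circ y]$. $D:=\{h\in{}^\bullet\mathbb{R}:\limsup_{t\to0}|h(t)/t|<+\infty\}$ and $D_k:=\{h\in{}^\bullet\mathbb{R}: h^k\in D\}$; elements of $D_k$ have standard part $0$, so $x+h\in{}^\bullet A$. *)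

theory Defs
  imports "HOL-Analysis.Analysis" "HOL-Library.Landau_Symbols"
begin

text \<open>Fermat reals, worked with at the level of representatives.
  A representative is a function real => real; the class [x] in the quotient
  is handled through the relation fermat_eq.\<close>

definition nilpotent :: "(real \<Rightarrow> real) \<Rightarrow> bool" where
  "nilpotent x \<longleftrightarrow> (\<exists>m::nat. (\<lambda>t. \<bar>x t - x 0\<bar> ^ m) \<in> o[at 0](\<lambda>t. t))"

definition Nil :: "real set \<Rightarrow> (real \<Rightarrow> real) set" where
  "Nil A = {x. nilpotent x \<and> (\<forall>t. x t \<in> A)}"

definition fermat_eq :: "(real \<Rightarrow> real) \<Rightarrow> (real \<Rightarrow> real) \<Rightarrow> bool" where
  "fermat_eq x y \<longleftrightarrow> (\<lambda>t. x t - y t) \<in> o[at 0](\<lambda>t. t)"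

definition in_D :: "(real \<Rightarrow> real) \<Rightarrow> bool" where
  "in_D h \<longleftrightarrow> nilpotent h \<and> Limsup (at 0) (\<lambda>t. ereal \<bar>h t / t\<bar>) < \<infinity>"

definition in_Dk :: "nat \<Rightarrow> (real \<Rightarrow> real) \<Rightarrow> bool" where
  "in_Dk k h \<longleftrightarrow> nilpotent h \<and> in_D (\<lambda>t. h t ^ k)"

definition Ck_on :: "nat \<Rightarrow> real set \<Rightarrow> (real \<Rightarrow> real) \<Rightarrow> bool" where
  "Ck_on k A f \<longleftrightarrow> (\<forall>i<k. \<forall>y\<in>A. ((deriv ^^ i) f) differentiable (at y))
                   \<and> continuous_on A ((deriv ^^ k) f)"

end

theory Submission
  imports Defs
begin

lemma Ck_deriv:
  assumes "Ck_on k A f" "m < k" "y \<in> A"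
  shows "((deriv ^^ m) f has_real_derivative (deriv ^^ Suc m) f y) (at y)"
  using assms unfolding Ck_on_def
  by (simp add: DERIV_deriv_iff_real_differentiable)

lemma taylor_rem:
  assumes "k \<ge> 1" "open A" "x \<in> A" "Ck_on k A f" "e > 0"
  shows "\<exists>d>0. \<forall>z. \<bar>z - x\<bar> < d \<longrightarrow>
     \<bar>f z - (\<Sum>i\<le>k. (deriv^^i) f x / fact i * (z - x)^i)\<bar> \<le> e * \<bar>z - x\<bar>^k"
proof -
  obtain r where r: "r > 0" "cball x r \<subseteq> A"
    using assms(2,3) open_contains_cball by blast
  have "isCont ((deriv ^^ k) f) x"
    using assms(2,3,4) unfolding Ck_on_def using continuous_on_eq_continuous_at by blast
  then obtain d0 where d0: "d0 > 0" "\<And>z. \<bar>z - x\<bar> < d0 \<Longrightarrow> \<bar>(deriv ^^ k) f z - (deriv ^^ k) f x\<bar> < e"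
    using assms(5) unfolding continuous_at_eps_delta dist_real_def by blast
  define d where "d = min r d0"
  have "\<forall>z. \<bar>z - x\<bar> < d \<longrightarrow>
     \<bar>f z - (\<Sum>i\<le>k. (deriv^^i) f x / fact i * (z - x)^i)\<bar> \<le> e * \<bar>z - x\<bar>^k"
  proof (intro allI impI)
    fix z assume z: "\<bar>z - x\<bar> < d"
    show "\<bar>f z - (\<Sum>i\<le>k. (deriv^^i) f x / fact i * (z - x)^i)\<bar> \<le> e * \<bar>z - x\<bar>^k"
    proof (cases "z = x")
      case True
      have "(\<Sum>i\<le>k. (deriv^^i) f x / fact i * (z - x)^i) = (\<Sum>i\<le>k. if i = 0 then f x else 0)"
        by (intro sum.cong) (auto simp: True)
      then show ?thesis using True assms(5) by simp
    next
      case False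
      have DER: "\<forall>m t. m < k \<and> x - r \<le> t \<and> t \<le> x + r \<longrightarrow>
          DERIV ((deriv ^^ m) f) t :> (deriv ^^ Suc m) f t"
      proof (intro allI impI)
        fix m t assume "m < k \<and> x - r \<le> t \<and> t \<le> x + r"
        then have "t \<in> A" "m < k" using r by (auto simp: dist_real_def)
        then show "DERIV ((deriv ^^ m) f) t :> (deriv ^^ Suc m) f t"
          using Ck_deriv[OF assms(4)] by blast
      qed
      have "d \<le> r" unfolding d_def by simp
      then obtain t where t: "(if z < x then z < t \<and> t < x else x < t \<and> t < z)"
        "f z = (\<Sum>m<k. ((deriv ^^ m) f x / fact m) * (z - x)^m) + ((deriv ^^ k) f t / fact k) * (z - x)^k"
        using Taylor[of k "\<lambda>m. (deriv ^^ m) f" f "x - r" "x + r" x z, OF _ _ DER] assms(1) r(1) z False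
        by fastforce
      have "\<bar>t - x\<bar> < d0" using t(1) z unfolding d_def by (auto split: if_splits)
      then have lt: "\<bar>(deriv ^^ k) f t - (deriv ^^ k) f x\<bar> < e" using d0 by blast
      have "(\<Sum>i\<le>k. (deriv^^i) f x / fact i * (z - x)^i) = 
         (\<Sum>m<k. ((deriv ^^ m) f x / fact m) * (z - x)^m) + ((deriv ^^ k) f x / fact k) * (z - x)^k"
        using lessThan_Suc_atMost sum.lessThan_Suc by (metis (no_types, lifting))
      then have "f z - (\<Sum>i\<le>k. (deriv^^i) f x / fact i * (z - x)^i) 
          = ((deriv ^^ k) f t - (deriv ^^ k) f x) / fact k * (z - x)^k"
        using t(2) by (simp add: field_simps)
      then have "\<bar>f z - (\<Sum>i\<le>k. (deriv^^i) f x / fact i * (z - x)^i)\<bar> 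
          = \<bar>(deriv ^^ k) f t - (deriv ^^ k) f x\<bar> / fact k * \<bar>z - x\<bar>^k"
        by (simp add: abs_mult power_abs)
      also have "\<dots> \<le> \<bar>(deriv ^^ k) f t - (deriv ^^ k) f x\<bar> * \<bar>z - x\<bar>^k"
        by (intro mult_right_mono divide_left_mono_neg) (auto simp: divide_le_eq fact_ge_1 mult_le_cancel_left1)
      also have "\<dots> \<le> e * \<bar>z - x\<bar>^k"
        using lt by (intro mult_right_mono) auto
      finally show ?thesis .
    qed
  qed
  moreover have "d > 0" using r d0 unfolding d_def by simp
  ultimately show ?thesis by blast
qed

lemma ev_nz: "eventually (\<lambda>t::real. t \<noteq> 0) (at 0)"
  by (simp add: eventually_at_filter)

lemma pow_sum_bound:
  fixes a b :: real
  shows "\<bar>a + b\<bar>^k \<le> 2^k * (\<bar>a\<bar>^k + \<bar>b\<bar>^k)"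
proof -
  have "\<bar>a + b\<bar> \<le> 2 * max \<bar>a\<bar> \<bar>b\<bar>" by linarith
  then have "\<bar>a + b\<bar>^k \<le> (2 * max \<bar>a\<bar> \<bar>b\<bar>)^k" by (intro power_mono) auto
  also have "\<dots> = 2^k * (max \<bar>a\<bar> \<bar>b\<bar>)^k" by (simp add: power_mult_distrib)
  also have "(max \<bar>a\<bar> \<bar>b\<bar>)^k \<le> \<bar>a\<bar>^k + \<bar>b\<bar>^k"
    by (cases "\<bar>a\<bar> \<le> \<bar>b\<bar>") (auto simp: max_def)
  finally show ?thesis by simp
qed

lemma Dk_bound:
  assumes "k \<ge> 1" "in_Dk k h"
  shows "\<exists>B\<ge>0. eventually (\<lambda>t. \<bar>h t\<bar>^k \<le> B * \<bar>t\<bar>) (at 0)"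
proof -
  have "Limsup (at 0) (\<lambda>t. ereal \<bar>h t ^ k / t\<bar>) < \<infinity>"
    using assms(2) unfolding in_Dk_def in_D_def by simp
  then obtain n :: nat where "Limsup (at 0) (\<lambda>t. ereal \<bar>h t ^ k / t\<bar>) < ereal (real n)"
    using less_PInf_Ex_of_nat by auto
  then have "eventually (\<lambda>t. ereal \<bar>h t ^ k / t\<bar> < ereal (real n)) (at 0)"
    using Limsup_lessD by blast
  then have "eventually (\<lambda>t. \<bar>h t\<bar>^k \<le> real n * \<bar>t\<bar>) (at 0)"
    using ev_nz
  proof eventually_elim
    case (elim t)
    then have "\<bar>h t ^ k\<bar> / \<bar>t\<bar> < real n" by (simp add: abs_divide)
    then show ?case using elim by (simp add: divide_less_eq power_abs)
  qed
  then show ?thesis by (intro exI[of _ "real n"]) auto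
qed

lemma Dk_tendsto:
  assumes "k \<ge> 1" "in_Dk k h"
  shows "(h \<longlongrightarrow> 0) (at 0)"
proof -
  obtain B where B: "B \<ge> 0" "eventually (\<lambda>t. \<bar>h t\<bar>^k \<le> B * \<bar>t\<bar>) (at 0)"
    using Dk_bound[OF assms] by blast
  have "eventually (\<lambda>t. norm (h t) \<le> root k (B * \<bar>t\<bar>)) (at 0)"
    using B(2)
  proof eventually_elim
    case (elim t)
    have "\<bar>h t\<bar> = root k (\<bar>h t\<bar>^k)" using assms(1) by (simp add: real_root_power_cancel)
    also have "\<dots> \<le> root k (B * \<bar>t\<bar>)" using assms(1) elim by (intro real_root_le_mono) auto
    finally show ?case by simp
  qed
  moreover have "((\<lambda>t. root k (B * \<bar>t\<bar>)) \<longlongrightarrow> 0) (at 0)"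
  proof -
    have "((\<lambda>t. root k (B * \<bar>t\<bar>)) \<longlongrightarrow> root k (B * \<bar>0\<bar>)) (at 0)"
      by (intro tendsto_intros)
    then show ?thesis by simp
  qed
  ultimately show ?thesis by (rule Lim_null_comparison)
qed

lemma part1:
  assumes "k \<ge> 1" "open A" "x \<in> A" "Ck_on k A f" "in_Dk k h" "fermat_eq y (\<lambda>t. x + h t)"
  shows "fermat_eq (\<lambda>t. f (y t)) (\<lambda>t. \<Sum>i\<le>k. h t ^ i / fact i * (deriv ^^ i) f x)"
proof -
  define D where "D = (\<lambda>i. (deriv ^^ i) f x)"
  define e where "e = (\<lambda>t. y t - x - h t)"
  define R where "R = (\<lambda>z. f z - (\<Sum>i\<le>k. D i / fact i * (z - x)^i))"
  define S where "S = (\<lambda>i t. \<Sum>j<i. h t^(i - Suc j) * (y t - x)^j)"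
  obtain B where B: "B \<ge> 0" "eventually (\<lambda>t. \<bar>h t\<bar>^k \<le> B * \<bar>t\<bar>) (at 0)"
    using Dk_bound[OF assms(1,5)] by blast
  have H: "(h \<longlongrightarrow> 0) (at 0)" using Dk_tendsto[OF assms(1,5)] .
  have eo: "e \<in> o[at 0](\<lambda>t. t)"
    using assms(6) unfolding fermat_eq_def e_def by (simp add: algebra_simps)
  have E1: "((\<lambda>t. e t / t) \<longlongrightarrow> 0) (at 0)" using smalloD_tendsto[OF eo] .
  have E2: "(e \<longlongrightarrow> 0) (at 0)"
  proof -
    have "((\<lambda>t. e t / t * t) \<longlongrightarrow> 0 * 0) (at 0)"
      by (intro tendsto_intros E1)
    moreover have "eventually (\<lambda>t. e t / t * t = e t) (at 0)"
      using ev_nz by eventually_elim simp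
    ultimately show ?thesis using Lim_transform_eventually by fastforce
  qed
  have Y: "((\<lambda>t. y t - x) \<longlongrightarrow> 0) (at 0)"
  proof -
    have "((\<lambda>t. e t + h t) \<longlongrightarrow> 0 + 0) (at 0)" by (intro tendsto_intros E2 H)
    then show ?thesis by (simp add: e_def)
  qed
  have ident: "(\<lambda>t. (f (y t) - (\<Sum>i\<le>k. h t ^ i / fact i * D i)) / t)
     = (\<lambda>t. R (y t) / t + (\<Sum>i\<le>k. D i / fact i * (e t / t) * S i t))"
  proof
    fix t
    have "f (y t) - (\<Sum>i\<le>k. h t ^ i / fact i * D i)
       = R (y t) + (\<Sum>i\<le>k. D i / fact i * ((y t - x)^i - h t^i))"
    proof -
      have "(\<Sum>i\<le>k. D i / fact i * ((y t - x)^i - h t^i)) =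
         (\<Sum>i\<le>k. D i / fact i * (y t - x)^i) - (\<Sum>i\<le>k. h t ^ i / fact i * D i)"
        by (simp add: sum_subtractf[symmetric] algebra_simps)
      then show ?thesis by (simp add: R_def)
    qed
    also have "(\<Sum>i\<le>k. D i / fact i * ((y t - x)^i - h t^i)) = (\<Sum>i\<le>k. D i / fact i * e t * S i t)"
      by (intro sum.cong refl) (simp add: power_diff_sumr2 e_def S_def)
    finally show "(f (y t) - (\<Sum>i\<le>k. h t ^ i / fact i * D i)) / t
     = R (y t) / t + (\<Sum>i\<le>k. D i / fact i * (e t / t) * S i t)"
      by (simp add: add_divide_distrib sum_divide_distrib)
  qed
  have T2: "((\<lambda>t. \<Sum>i\<le>k. D i / fact i * (e t / t) * S i t) \<longlongrightarrow> 0) (at 0)"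
  proof -
    have "((\<lambda>t. \<Sum>i\<le>k. D i / fact i * (e t / t) * S i t) \<longlongrightarrow>
       (\<Sum>i\<le>k. D i / fact i * 0 * (\<Sum>j<i. 0^(i - Suc j) * 0^j))) (at 0)"
      unfolding S_def by (intro tendsto_intros E1 H Y)
    then show ?thesis by simp
  qed
  have T1: "((\<lambda>t. R (y t) / t) \<longlongrightarrow> 0) (at 0)"
    unfolding tendsto_iff
  proof (intro allI impI)
    fix \<epsilon> :: real assume "\<epsilon> > 0"
    define K where "K = 2^k * (B + 1)"
    have K: "K > 0" using B(1) unfolding K_def by simp
    define e' where "e' = \<epsilon> / (K + 1)"
    have e': "e' > 0" using K \<open>\<epsilon> > 0\<close> unfolding e'_def by simp
    obtain d where d: "d > 0" "\<And>z. \<bar>z - x\<bar> < d \<Longrightarrow> \<bar>R z\<bar> \<le> e' * \<bar>z - x\<bar>^k"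
      using taylor_rem[OF assms(1-4) e'] unfolding R_def D_def by blast
    have ev1: "eventually (\<lambda>t. \<bar>y t - x\<bar> < d) (at 0)"
      using Y d(1) unfolding tendsto_iff dist_real_def by force
    have ev2: "eventually (\<lambda>t. \<bar>e t\<bar> \<le> 1 * \<bar>t\<bar>) (at 0)"
      using landau_o.smallD[OF eo, of 1] by simp
    have ev3: "eventually (\<lambda>t. \<bar>e t\<bar> < 1) (at 0)"
      using E2 unfolding tendsto_iff dist_real_def by force
    show "eventually (\<lambda>t. dist (R (y t) / t) 0 < \<epsilon>) (at 0)"
      using ev1 ev2 ev3 ev_nz B(2)
    proof eventually_elim
      case (elim t)
      have "\<bar>e t\<bar>^k \<le> \<bar>e t\<bar>^1"
        using elim assms(1) by (intro power_decreasing) auto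
      then have ek: "\<bar>e t\<bar>^k \<le> \<bar>t\<bar>" using elim by simp
      have "y t - x = h t + e t" unfolding e_def by simp
      then have "\<bar>y t - x\<bar>^k \<le> 2^k * (\<bar>h t\<bar>^k + \<bar>e t\<bar>^k)"
        using pow_sum_bound by simp
      also have "\<dots> \<le> 2^k * (B * \<bar>t\<bar> + \<bar>t\<bar>)"
        using elim ek by (intro mult_left_mono add_mono) auto
      also have "\<dots> = K * \<bar>t\<bar>" unfolding K_def by (simp add: algebra_simps)
      finally have yk: "\<bar>y t - x\<bar>^k \<le> K * \<bar>t\<bar>" .
      have "\<bar>R (y t)\<bar> \<le> e' * \<bar>y t - x\<bar>^k" using d(2) elim by blast
      also have "\<dots> \<le> e' * (K * \<bar>t\<bar>)" using yk e' by (intro mult_left_mono) auto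
      also have "\<dots> < \<epsilon> * \<bar>t\<bar>"
      proof -
        have "e' * K < \<epsilon>" unfolding e'_def using K \<open>\<epsilon> > 0\<close>
          by (simp add: field_simps)
        then show ?thesis using elim by (simp add: mult.assoc[symmetric])
      qed
      finally show ?case using elim by (simp add: dist_real_def abs_divide divide_less_eq)
    qed
  qed
  have "((\<lambda>t. (f (y t) - (\<Sum>i\<le>k. h t ^ i / fact i * D i)) / t) \<longlongrightarrow> 0 + 0) (at 0)"
    unfolding ident by (intro tendsto_intros T1 T2)
  then have "(\<lambda>t. f (y t) - (\<Sum>i\<le>k. h t ^ i / fact i * D i)) \<in> o[at 0](\<lambda>t. t)"
    using smalloI_tendsto[OF _ ev_nz] by simp
  then show ?thesis unfolding fermat_eq_def D_def .
qed

lemma poly_zero: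
  fixes a :: "nat \<Rightarrow> real" and u :: "real \<Rightarrow> real"
  assumes "k \<ge> 1" "\<forall>t. 0 < t \<and> t < 1 \<longrightarrow> u t > 0 \<and> u t ^ k = t" "(u \<longlongrightarrow> 0) (at_right 0)"
    "((\<lambda>t. (\<Sum>i\<le>k. a i * u t ^ i) / t) \<longlongrightarrow> 0) (at_right 0)"
  shows "\<forall>i\<le>k. a i = 0"
proof -
  have "j \<le> k \<longrightarrow> a j = 0" for j
  proof (induction j rule: less_induct)
    case (less j)
    show ?case
    proof
      assume jk: "j \<le> k"
      define Q where "Q = (\<lambda>t. \<Sum>i\<le>k. ((if i < j then 0 else a i) * u t^(i-j)))"
      have ev: "eventually (\<lambda>t. (\<Sum>i\<le>k. a i * u t ^ i) / t * u t ^ (k - j) = Q t) (at_right 0)"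
      proof -
        have "eventually (\<lambda>t. 0 < t \<and> t < 1) (at_right (0::real))"
          by (simp add: eventually_at_right_less eventually_conj eventually_at_right_field) (auto intro: exI[of _ 1])
        then show ?thesis
        proof eventually_elim
          case (elim t)
          then have ut: "u t > 0" "u t ^ k = t" using assms(2) by auto
          have "(\<Sum>i\<le>k. a i * u t ^ i) = (\<Sum>i\<le>k. u t ^ j * ((if i < j then 0 else a i) * u t^(i-j)))"
          proof (intro sum.cong refl)
            fix i assume "i \<in> {..k}"
            show "a i * u t ^ i = u t ^ j * ((if i < j then 0 else a i) * u t^(i-j))"
            proof (cases "i < j")
              case True then show ?thesis using less.IH jk by simp
            next
              case False
              then have "u t ^ i = u t ^ j * u t ^ (i - j)" by (simp add: power_add[symmetric])
              then show ?thesis using False by simp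
            qed
          qed
          also have "\<dots> = u t ^ j * Q t" unfolding Q_def by (simp add: sum_distrib_left)
          finally have s: "(\<Sum>i\<le>k. a i * u t ^ i) = u t ^ j * Q t" .
          have teq: "t = u t ^ j * u t ^ (k - j)" using ut jk by (simp add: power_add[symmetric])
          have "(u t ^ j * Q t) / (u t ^ j * u t ^ (k - j)) * u t ^ (k - j) = Q t"
            using ut by (simp add: field_simps)
          then show ?case by (metis s teq)
        qed
      qed
      have "((\<lambda>t. (\<Sum>i\<le>k. a i * u t ^ i) / t * u t ^ (k - j)) \<longlongrightarrow> 0 * 0 ^ (k - j)) (at_right 0)"
        by (intro tendsto_intros assms(3,4))
      then have L1: "(Q \<longlongrightarrow> 0) (at_right 0)"
        using Lim_transform_eventually[OF _ ev] by simp
      have "(Q \<longlongrightarrow> (\<Sum>i\<le>k. ((if i < j then 0 else a i) * 0^(i-j)))) (at_right 0)"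
        unfolding Q_def by (intro tendsto_intros assms(3))
      moreover have "(\<Sum>i\<le>k. ((if i < j then 0 else a i) * (0::real)^(i-j))) = (\<Sum>i\<le>k. (if i = j then a j else 0))"
        by (intro sum.cong refl) auto
      ultimately have L2: "(Q \<longlongrightarrow> a j) (at_right 0)" using jk by simp
      show "a j = 0" using tendsto_unique[OF _ L2 L1] by simp
    qed
  qed
  then show ?thesis by blast
qed

lemma small_sq:
  fixes g :: "real \<Rightarrow> real"
  assumes "\<And>t. \<bar>g t\<bar> \<le> C * t^2"
  shows "g \<in> o[at 0](\<lambda>t. t)"
proof -
  have "((\<lambda>t. g t / t) \<longlongrightarrow> 0) (at 0)"
  proof (rule Lim_null_comparison)
    show "eventually (\<lambda>t. norm (g t / t) \<le> C * \<bar>t\<bar>) (at 0)"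
      using ev_nz
    proof eventually_elim
      case (elim t)
      have "\<bar>g t\<bar> / \<bar>t\<bar> \<le> C * t^2 / \<bar>t\<bar>" using assms[of t] elim by (intro divide_right_mono) auto
      also have "C * t^2 / \<bar>t\<bar> = C * \<bar>t\<bar>"
      proof -
        show ?thesis using elim by (cases "t > 0") (auto simp: field_simps power2_eq_square)
      qed
      finally show ?case by (simp add: abs_divide)
    qed
    have "((\<lambda>t. C * \<bar>t\<bar>) \<longlongrightarrow> C * \<bar>0\<bar>) (at 0)" by (intro tendsto_intros)
    then show "((\<lambda>t. C * \<bar>t\<bar>) \<longlongrightarrow> 0) (at 0)" by simp
  qed
  then show ?thesis using smalloI_tendsto[OF _ ev_nz] by simp
qed

theorem mainTheorem13:
  fixes k :: nat and A :: "real set" and x :: real and f :: "real \<Rightarrow> real"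
  assumes "k \<ge> 1" and "open A" and "x \<in> A" and "Ck_on k A f"
  shows "(\<forall>h. in_Dk k h \<longrightarrow>
            (\<forall>y\<in>Nil A. fermat_eq y (\<lambda>t. x + h t) \<longrightarrow>
               fermat_eq (\<lambda>t. f (y t))
                 (\<lambda>t. \<Sum>i\<le>k. h t ^ i / fact i * (deriv ^^ i) f x)))
       \<and> (\<forall>c :: nat \<Rightarrow> real.
            (\<forall>h. in_Dk k h \<longrightarrow>
               (\<forall>y\<in>Nil A. fermat_eq y (\<lambda>t. x + h t) \<longrightarrow>
                  fermat_eq (\<lambda>t. f (y t)) (\<lambda>t. \<Sum>i\<le>k. h t ^ i / fact i * c i)))
            \<longrightarrow> (\<forall>i\<le>k. c i = (deriv ^^ i) f x))"
proof -
  define D where "D = (\<lambda>i. (deriv ^^ i) f x)"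
  have P1: "\<forall>h. in_Dk k h \<longrightarrow>
            (\<forall>y\<in>Nil A. fermat_eq y (\<lambda>t. x + h t) \<longrightarrow>
               fermat_eq (\<lambda>t. f (y t))
                 (\<lambda>t. \<Sum>i\<le>k. h t ^ i / fact i * (deriv ^^ i) f x))"
    using part1[OF assms] by blast
  moreover have "\<forall>c :: nat \<Rightarrow> real.
            (\<forall>h. in_Dk k h \<longrightarrow>
               (\<forall>y\<in>Nil A. fermat_eq y (\<lambda>t. x + h t) \<longrightarrow>
                  fermat_eq (\<lambda>t. f (y t)) (\<lambda>t. \<Sum>i\<le>k. h t ^ i / fact i * c i)))
            \<longrightarrow> (\<forall>i\<le>k. c i = (deriv ^^ i) f x)"
  proof (rule allI, rule impI)
    fix c :: "nat \<Rightarrow> real"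
    assume hyp: "\<forall>h. in_Dk k h \<longrightarrow>
               (\<forall>y\<in>Nil A. fermat_eq y (\<lambda>t. x + h t) \<longrightarrow>
                  fermat_eq (\<lambda>t. f (y t)) (\<lambda>t. \<Sum>i\<le>k. h t ^ i / fact i * c i))"
    obtain r where r: "r > 0" "ball x r \<subseteq> A" using open_contains_ball assms(2,3) by blast
    define \<epsilon> where "\<epsilon> = r / 2"
    have \<epsilon>: "\<epsilon> > 0" "\<epsilon> < r" using r unfolding \<epsilon>_def by auto
    define u where "u = (\<lambda>t::real. root k (min 1 \<bar>t\<bar>))"
    define h where "h = (\<lambda>t. \<epsilon> * u t)"
    have kpos: "0 < k" using assms(1) by simp
    have u0: "0 \<le> u t" for t by (simp add: u_def real_root_ge_zero)
    have u1: "u t \<le> 1" for t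
    proof -
      have "u t \<le> root k 1" unfolding u_def using kpos by (intro real_root_le_mono) auto
      then show ?thesis using kpos by simp
    qed
    have uk: "u t ^ k = min 1 \<bar>t\<bar>" for t using kpos by (simp add: u_def)
    have hk: "h t ^ k = \<epsilon>^k * min 1 \<bar>t\<bar>" for t by (simp add: h_def power_mult_distrib uk)
    have h0: "h 0 = 0" by (simp add: h_def u_def)
    have mt: "(min 1 \<bar>t\<bar>)^2 \<le> t^2" for t :: real
    proof -
      have "(min 1 \<bar>t\<bar>)^2 \<le> \<bar>t\<bar>^2" by (intro power_mono) auto
      then show ?thesis by simp
    qed
    have hsq: "\<bar>h t\<bar>^(2*k) \<le> \<epsilon>^(2*k) * t^2" for t
    proof -
      have "\<bar>h t\<bar>^(2*k) = (\<bar>h t\<bar>^k)^2"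
        by (simp add: power_mult[symmetric] mult.commute)
      also have "\<dots> = (h t ^ k)^2"
        by (metis power_abs power2_abs)
      also have "\<dots> = \<epsilon>^(2*k) * (min 1 \<bar>t\<bar>)^2"
        by (simp add: hk power_mult_distrib power_mult[symmetric] mult.commute)
      also have "\<dots> \<le> \<epsilon>^(2*k) * t^2" using mt \<epsilon> by (intro mult_left_mono) auto
      finally show ?thesis .
    qed
    have nil_h: "nilpotent h"
      unfolding nilpotent_def
      by (intro exI[of _ "2*k"] small_sq[of _ "\<epsilon>^(2*k)"]) (simp add: h0 hsq)
    have nil_hk: "nilpotent (\<lambda>t. h t ^ k)"
      unfolding nilpotent_def
    proof (intro exI[of _ "2"] small_sq[of _ "\<epsilon>^(2*k)"])
      fix t :: real
      have "\<bar>\<bar>h t ^ k - h 0 ^ k\<bar>^2\<bar> = (\<epsilon>^k * min 1 \<bar>t\<bar>)^2"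
        using kpos by (simp add: h0 hk zero_power)
      also have "\<dots> = \<epsilon>^(2*k) * (min 1 \<bar>t\<bar>)^2"
        by (simp add: power_mult_distrib power_mult[symmetric] mult.commute)
      also have "\<dots> \<le> \<epsilon>^(2*k) * t^2" using mt \<epsilon> by (intro mult_left_mono) auto
      finally show "\<bar>\<bar>h t ^ k - h 0 ^ k\<bar>^2\<bar> \<le> \<epsilon>^(2*k) * t^2" .
    qed
    have "Limsup (at 0) (\<lambda>t. ereal \<bar>h t ^ k / t\<bar>) \<le> ereal (\<epsilon>^k)"
    proof (rule Limsup_bounded, rule always_eventually, rule allI)
      fix t :: real
      have "\<bar>h t ^ k / t\<bar> \<le> \<epsilon>^k"
      proof (cases "t = 0")
        case True then show ?thesis using \<epsilon> by simp
      next
        case False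
        have "\<bar>h t ^ k / t\<bar> = \<epsilon>^k * (min 1 \<bar>t\<bar> / \<bar>t\<bar>)"
          using \<epsilon> by (simp add: hk abs_divide abs_mult)
        also have "\<dots> \<le> \<epsilon>^k * 1"
          using False \<epsilon> by (intro mult_left_mono) auto
        finally show ?thesis by simp
      qed
      then show "ereal \<bar>h t ^ k / t\<bar> \<le> ereal (\<epsilon>^k)" by simp
    qed
    then have "Limsup (at 0) (\<lambda>t. ereal \<bar>h t ^ k / t\<bar>) < \<infinity>"
      using order_le_less_trans by fastforce
    then have Dk: "in_Dk k h"
      unfolding in_Dk_def in_D_def using nil_h nil_hk by simp
    define y where "y = (\<lambda>t. x + h t)"
    have yA: "y t \<in> A" for t
    proof -
      have "\<bar>h t\<bar> \<le> \<epsilon>" using u0[of t] u1[of t] \<epsilon> by (simp add: h_def abs_mult mult_left_le)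
      then have "y t \<in> ball x r" using \<epsilon> by (simp add: y_def dist_real_def)
      then show ?thesis using r by blast
    qed
    have nil_y: "nilpotent y"
      unfolding nilpotent_def
      by (intro exI[of _ "2*k"] small_sq[of _ "\<epsilon>^(2*k)"]) (simp add: y_def h0 hsq)
    have yN: "y \<in> Nil A" unfolding Nil_def using nil_y yA by simp
    have feq: "fermat_eq y (\<lambda>t. x + h t)"
      unfolding fermat_eq_def y_def by (intro small_sq[of _ 0]) simp
    have F1: "fermat_eq (\<lambda>t. f (y t)) (\<lambda>t. \<Sum>i\<le>k. h t ^ i / fact i * c i)"
      using hyp Dk yN feq by blast
    have F2: "fermat_eq (\<lambda>t. f (y t)) (\<lambda>t. \<Sum>i\<le>k. h t ^ i / fact i * D i)"
      using P1 Dk yN feq unfolding D_def by blast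
    define a where "a = (\<lambda>i. \<epsilon>^i / fact i * (D i - c i))"
    have L1: "((\<lambda>t. (f (y t) - (\<Sum>i\<le>k. h t ^ i / fact i * c i)) / t) \<longlongrightarrow> 0) (at 0)"
      using smalloD_tendsto F1 unfolding fermat_eq_def by blast
    have L2: "((\<lambda>t. (f (y t) - (\<Sum>i\<le>k. h t ^ i / fact i * D i)) / t) \<longlongrightarrow> 0) (at 0)"
      using smalloD_tendsto F2 unfolding fermat_eq_def by blast
    have T: "((\<lambda>t. (f (y t) - (\<Sum>i\<le>k. h t ^ i / fact i * c i)) / t
             - (f (y t) - (\<Sum>i\<le>k. h t ^ i / fact i * D i)) / t) \<longlongrightarrow> 0) (at 0)"
      using tendsto_diff[OF L1 L2] by simp
    have EQ: "(\<lambda>t. (f (y t) - (\<Sum>i\<le>k. h t ^ i / fact i * c i)) / t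
             - (f (y t) - (\<Sum>i\<le>k. h t ^ i / fact i * D i)) / t)
        = (\<lambda>t. (\<Sum>i\<le>k. a i * u t ^ i) / t)"
    proof
      fix t
      have "(\<Sum>i\<le>k. h t ^ i / fact i * D i) - (\<Sum>i\<le>k. h t ^ i / fact i * c i)
          = (\<Sum>i\<le>k. a i * u t ^ i)"
        unfolding sum_subtractf[symmetric]
      proof (intro sum.cong refl)
        fix i
        have "h t ^ i / fact i * D i - h t ^ i / fact i * c i = h t ^ i * (D i - c i) / fact i"
          by (simp add: diff_divide_distrib right_diff_distrib)
        also have "\<dots> = (\<epsilon>^i / fact i * (D i - c i)) * u t ^ i"
          by (simp add: h_def power_mult_distrib)
        finally show "h t ^ i / fact i * D i - h t ^ i / fact i * c i = a i * u t ^ i"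
          unfolding a_def .
      qed
      then show "(f (y t) - (\<Sum>i\<le>k. h t ^ i / fact i * c i)) / t
             - (f (y t) - (\<Sum>i\<le>k. h t ^ i / fact i * D i)) / t = (\<Sum>i\<le>k. a i * u t ^ i) / t"
      proof -
        have "(f (y t) - (\<Sum>i\<le>k. h t ^ i / fact i * c i)) / t
             - (f (y t) - (\<Sum>i\<le>k. h t ^ i / fact i * D i)) / t
            = ((f (y t) - (\<Sum>i\<le>k. h t ^ i / fact i * c i))
             - (f (y t) - (\<Sum>i\<le>k. h t ^ i / fact i * D i))) / t"
          by (rule diff_divide_distrib[symmetric])
        also have "(f (y t) - (\<Sum>i\<le>k. h t ^ i / fact i * c i))
             - (f (y t) - (\<Sum>i\<le>k. h t ^ i / fact i * D i))
            = (\<Sum>i\<le>k. h t ^ i / fact i * D i) - (\<Sum>i\<le>k. h t ^ i / fact i * c i)"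
          by linarith
        finally show ?thesis using \<open>_ = (\<Sum>i\<le>k. a i * u t ^ i)\<close> by simp
      qed
    qed
    have L0: "((\<lambda>t. (\<Sum>i\<le>k. a i * u t ^ i) / t) \<longlongrightarrow> 0) (at 0)"
      using T unfolding EQ .
    have L: "((\<lambda>t. (\<Sum>i\<le>k. a i * u t ^ i) / t) \<longlongrightarrow> 0) (at_right 0)"
      by (rule filterlim_within_subset[OF L0]) simp
    have U: "\<forall>t. 0 < t \<and> t < 1 \<longrightarrow> u t > 0 \<and> u t ^ k = t"
    proof (intro allI impI)
      fix t :: real assume t: "0 < t \<and> t < 1"
      then have m: "min 1 \<bar>t\<bar> = t" by auto
      then have "u t = root k t" by (simp add: u_def)
      then have "u t > 0" using kpos t real_root_gt_zero by simp
      then show "u t > 0 \<and> u t ^ k = t" using uk[of t] m by simp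
    qed
    have U0: "(u \<longlongrightarrow> 0) (at_right 0)"
    proof -
      have "((\<lambda>t. root k (min 1 \<bar>t\<bar>)) \<longlongrightarrow> root k (min 1 \<bar>0\<bar>)) (at_right (0::real))"
        by (intro tendsto_intros)
      then show ?thesis by (simp add: u_def)
    qed
    have az: "\<forall>i\<le>k. a i = 0" using poly_zero[OF assms(1) U U0 L] .
    show "\<forall>i\<le>k. c i = (deriv ^^ i) f x"
    proof (intro allI impI)
      fix i assume "i \<le> k"
      then have "\<epsilon>^i / fact i * (D i - c i) = 0" using az a_def by simp
      then show "c i = (deriv ^^ i) f x" using \<epsilon> by (simp add: D_def)
    qed
  qed
  ultimately show ?thesis by blast
qed

end
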